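(* Let $N$ be a free abelian group of finite rank $n$ with a homomorphism $\psi:N\to\mathbb{Z}^2$ with finite cokernel, $K=\ker\psi$, $\langle a,b\rangle=\det(\psi(a),\psi(b))$. Let $\tilde{\mathbf{s}}=(e_i)_{1\le i\le n}$ be a cyclically ordered seed with underlying seed $\mathbf{s}$, and let $\mathscr{S}$ be the mutation equivalence class of $\mathbf{s}$. Then for all $\alpha,\beta\in K$, $(\alpha,\beta)_{\mathscr{S}}=-\chi_{\tilde{\mathbf{s}}}(\alpha,\beta)$.
   Context: A seed is an unordered basis $\{e_i\}$ of $N$ with each $\psi(e_i)$ nonzero primitive; seeds are mutation equivalent if related by finitely many mutations $\mu_j^\epsilon$ ($e_j\mapsto-e_j$, $e_i\mapsto e_i+[\epsilon\langle e_i,e_j\rangle]_+e_j$ for $i\ne j$, $[a]_+=\max(0,a)$, $\epsilon\in\{\pm\}$). A cyclic ordering of a seed is an ordering $(e_1,\dots,e_n)$ for which there are determinations $\theta_i$ of the arguments of $\psi(e_i)\in\mathbb{R}^2=\mathbb{C}$ with $\theta_1\le\theta_2\le\cdots\le\theta_n\le\theta_1+2\pi$. The bilinear form $\chi_{\tilde{\mathbf{s}}}$ on $N$ is defined by $\chi_{\tilde{\mathbf{s}}}(e_i,e_j)=1$ if $i=j$, $\langle e_i,e_j\rangle$ if $i>j$, $0$ if $i<j$. Intersection form: choose a smooth complete fan containing the rays $\mathbb{R}_{\ge0}\psi(e_i)$, with toric surface $\overline{Y}$, toric divisors $\overline{D}_\rho$, and $\overline{D}_i$ the divisor of the ray of $\psi(e_i)$;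 blow up distinct points $p_i\in\overline{D}_i$ that are smooth points of the toric boundary to get $\pi:Y\to\overline{Y}$ with exceptional curves $E_i$. For $a=\sum a_ie_i\in K$ set $\iota_\pi(a)=\pi^*C_a-\sum a_iE_i$, where $C_a\in NS(\overline{Y})$ is the unique class with $C_a\cdot\overline{D}_\rho=\sum_{i:\overline{D}_i=\overline{D}_\rho}a_i$ for each ray $\rho$. Then $(a,b)_{\mathscr{S}}:=\iota_\pi(a)\cdot\iota_\pi(b)$ (this depends only on $\mathscr{S}$). *)

theory Defs
  imports Complex_Main
begin

(* Lattice Z^2 as int \<times> int; <a,b> = det(psi a, psi b). *)
definition det2 :: "int \<times> int \<Rightarrow> int \<times> int \<Rightarrow> int" where
  "det2 u w = fst u * snd w - snd u * fst w"

definition to_complex :: "int \<times> int \<Rightarrow> complex" where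
  "to_complex u = Complex (real_of_int (fst u)) (real_of_int (snd u))"

definition primitive :: "int \<times> int \<Rightarrow> bool" where
  "primitive u \<longleftrightarrow> u \<noteq> (0,0) \<and> gcd (fst u) (snd u) = 1"

definition arg_det :: "int \<times> int \<Rightarrow> real \<Rightarrow> bool" where
  "arg_det u \<theta> \<longleftrightarrow> (\<exists>r>0. to_complex u = complex_of_real r * cis \<theta>)"

(* The seed is the basis (e_0,...,e_{n-1}) of N; we identify N with Z^n via this
   basis, so psi is determined by v i = psi(e_i).  Elements of N are coefficient
   vectors a :: nat \<Rightarrow> int (only a i for i < n matter). *)

(* psi has finite cokernel iff its image has rank 2 *)
definition finite_coker :: "nat \<Rightarrow> (nat \<Rightarrow> int \<times> int) \<Rightarrow> bool" where
  "finite_coker n v \<longleftrightarrow> (\<exists>i<n. \<exists>j<n. det2 (v i) (v j) \<noteq> 0)"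

definition is_seed :: "nat \<Rightarrow> (nat \<Rightarrow> int \<times> int) \<Rightarrow> bool" where
  "is_seed n v \<longleftrightarrow> (\<forall>i<n. primitive (v i))"

definition cyclically_ordered :: "nat \<Rightarrow> (nat \<Rightarrow> int \<times> int) \<Rightarrow> bool" where
  "cyclically_ordered n v \<longleftrightarrow>
     (\<exists>\<theta>::nat \<Rightarrow> real. (\<forall>i<n. arg_det (v i) (\<theta> i))
        \<and> (\<forall>i. Suc i < n \<longrightarrow> \<theta> i \<le> \<theta> (Suc i))
        \<and> (0 < n \<longrightarrow> \<theta> (n - 1) \<le> \<theta> 0 + 2 * pi))"

definition psi :: "nat \<Rightarrow> (nat \<Rightarrow> int \<times> int) \<Rightarrow> (nat \<Rightarrow> int) \<Rightarrow> int \<times> int" where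
  "psi n v a = ((\<Sum>i<n. a i * fst (v i)), (\<Sum>i<n. a i * snd (v i)))"

definition in_K :: "nat \<Rightarrow> (nat \<Rightarrow> int \<times> int) \<Rightarrow> (nat \<Rightarrow> int) \<Rightarrow> bool" where
  "in_K n v a \<longleftrightarrow> psi n v a = (0, 0)"

definition chi :: "nat \<Rightarrow> (nat \<Rightarrow> int \<times> int) \<Rightarrow> (nat \<Rightarrow> int) \<Rightarrow> (nat \<Rightarrow> int) \<Rightarrow> int" where
  "chi n v a b = (\<Sum>i<n. \<Sum>j<n. a i * b j *
      (if i = j then 1 else if i > j then det2 (v i) (v j) else 0))"

(* Smooth complete fan in R^2 with rays spanned by the primitive vectors
   w 0, ..., w (m-1), listed counterclockwise (strictly increasing arguments,
   total turn less than one revolution), consecutive rays (cyclically) spanning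
   smooth cones: det(w_k, w_{k+1}) = 1. *)
definition smooth_complete_fan :: "nat \<Rightarrow> (nat \<Rightarrow> int \<times> int) \<Rightarrow> bool" where
  "smooth_complete_fan m w \<longleftrightarrow> 3 \<le> m
     \<and> (\<forall>k<m. det2 (w k) (w ((k + 1) mod m)) = 1)
     \<and> (\<exists>\<phi>::nat \<Rightarrow> real. (\<forall>k<m. arg_det (w k) (\<phi> k))
           \<and> (\<forall>k. Suc k < m \<longrightarrow> \<phi> k < \<phi> (Suc k))
           \<and> \<phi> (m - 1) < \<phi> 0 + 2 * pi)"

(* the fan contains the rays R_{>=0} psi(e_i); since psi(e_i) and w k are both
   primitive, this means psi(e_i) is one of the w k *)
definition fan_contains_rays :: "nat \<Rightarrow> (nat \<Rightarrow> int \<times> int) \<Rightarrow> nat \<Rightarrow> (nat \<Rightarrow> int \<times> int) \<Rightarrow> bool" where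
  "fan_contains_rays m w n v \<longleftrightarrow> (\<forall>i<n. \<exists>k<m. w k = v i)"

(* Intersection numbers of toric divisors D_j . D_k on the smooth complete toric
   surface of the fan: D_k^2 = -b_k where w_{k-1} + w_{k+1} = b_k w_k
   (equivalently b_k = det(w_{k-1}, w_{k+1})), D_j.D_k = 1 for adjacent rays,
   0 otherwise. *)
definition toric_int :: "nat \<Rightarrow> (nat \<Rightarrow> int \<times> int) \<Rightarrow> nat \<Rightarrow> nat \<Rightarrow> int" where
  "toric_int m w j k =
     (if j = k then - det2 (w ((k + m - 1) mod m)) (w ((k + 1) mod m))
      else if j = (k + 1) mod m \<or> k = (j + 1) mod m then 1 else 0)"

(* divisor classes on the toric surface, represented by integer combinations
   c = \<Sum>_k c_k D_k of toric divisors (every class is of this form) *)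
definition toric_pair :: "nat \<Rightarrow> (nat \<Rightarrow> int \<times> int) \<Rightarrow> (nat \<Rightarrow> int) \<Rightarrow> (nat \<Rightarrow> int) \<Rightarrow> int" where
  "toric_pair m w c d = (\<Sum>j<m. \<Sum>k<m. c j * d k * toric_int m w j k)"

(* c represents the class C_a: C_a . D_rho = \<Sum>_{i : D_i = D_rho} a_i *)
definition represents_C :: "nat \<Rightarrow> (nat \<Rightarrow> int \<times> int) \<Rightarrow> nat \<Rightarrow> (nat \<Rightarrow> int \<times> int)
     \<Rightarrow> (nat \<Rightarrow> int) \<Rightarrow> (nat \<Rightarrow> int) \<Rightarrow> bool" where
  "represents_C m w n v a c \<longleftrightarrow>
     (\<forall>k<m. toric_pair m w c (\<lambda>l. if l = k then 1 else 0) = (\<Sum>i | i < n \<and> v i = w k. a i))"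

(* iota(a).iota(b) = (pi^* C_a - \<Sum> a_i E_i).(pi^* C_b - \<Sum> b_i E_i)
                   = C_a.C_b - \<Sum> a_i b_i,
   using pi^*C . E_i = 0, E_i . E_j = -delta_ij for the exceptional curves. *)
definition blowup_pair :: "nat \<Rightarrow> (nat \<Rightarrow> int \<times> int) \<Rightarrow> nat \<Rightarrow> (nat \<Rightarrow> int \<times> int)
     \<Rightarrow> (nat \<Rightarrow> int) \<Rightarrow> (nat \<Rightarrow> int) \<Rightarrow> (nat \<Rightarrow> int) \<Rightarrow> (nat \<Rightarrow> int) \<Rightarrow> int" where
  "blowup_pair m w n v a b c d = toric_pair m w c d - (\<Sum>i<n. a i * b i)"

end

theory Submission
  imports Defs
begin

lemma arg_det_diff:
  assumes "arg_det u x" "arg_det u y" shows "\<exists>z::int. y = x + 2*pi*z"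
proof -
  obtain r where r: "r > 0" "to_complex u = complex_of_real r * cis x" using assms(1) arg_det_def by auto
  obtain s where s: "s > 0" "to_complex u = complex_of_real s * cis y" using assms(2) arg_det_def by auto
  have "norm (to_complex u) = r" using r by (simp add: norm_mult)
  moreover have "norm (to_complex u) = s" using s by (simp add: norm_mult)
  ultimately have "r = s" by simp
  hence "cis x = cis y" using r s by simp
  hence "cis (y - x) = 1" by (metis cis_divide divide_self_if cis_neq_zero)
  hence "cos (y - x) = 1" by (metis cis.sel(1) one_complex.sel(1))
  then obtain k::int where "y - x = real_of_int k * 2 * pi" using cos_one_2pi_int by metis
  hence "y = x + 2*pi*k" by (simp add: algebra_simps)
  thus ?thesis by blast
qed

lemma win_unique:
  fixes a b p :: real and z :: int
  assumes "p \<le> a" "a < p + 2*pi" "p \<le> b" "b < p + 2*pi" "b = a + 2*pi*z" 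
  shows "a = b"
proof -
  have h1: "2*pi*z < 2*pi*1" using assms by linarith
  have h2: "2*pi*(-1) < 2*pi*z" using assms by linarith
  have "real_of_int z < 1" using h1 pi_gt_zero by (simp only: mult_less_cancel_left_pos)
  moreover have "-1 < real_of_int z" using h2 pi_gt_zero by (simp only: mult_less_cancel_left_pos)
  ultimately have "z = 0" by linarith
  thus ?thesis using assms by simp
qed


lemma det_id:
  assumes "det2 a b = 1" "det2 b c = 1"
  shows "det2 x a + det2 x c = det2 a c * det2 x b"
proof -
  have "det2 a b * det2 x c + det2 b c * det2 x a + det2 c a * det2 x b = 0"
    by (simp add: det2_def algebra_simps)
  moreover have "det2 c a = - det2 a c" by (simp add: det2_def)
  ultimately show ?thesis using assms by simp
qed

lemma det_self[simp]: "det2 x x = 0" by (simp add: det2_def)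

lemma psi_lin: "(\<Sum>i<n. f i * det2 (v i) x) = det2 (psi n v f) x"
proof -
  have "(\<Sum>i<n. f i * det2 (v i) x) = (\<Sum>i<n. f i * fst (v i) * snd x - f i * snd (v i) * fst x)"
    by (simp add: det2_def algebra_simps)
  also have "\<dots> = (\<Sum>i<n. f i * fst (v i)) * snd x - (\<Sum>i<n. f i * snd (v i)) * fst x"
    by (simp add: sum_subtractf sum_distrib_right)
  also have "\<dots> = det2 (psi n v f) x" by (simp add: det2_def psi_def)
  finally show ?thesis .
qed

lemma psi_bil: "(\<Sum>i<n. \<Sum>j<n. f i * g j * det2 (v i) (v j)) = det2 (psi n v f) (psi n v g)"
proof -
  have "(\<Sum>i<n. \<Sum>j<n. f i * g j * det2 (v i) (v j)) = (\<Sum>j<n. g j * (\<Sum>i<n. f i * det2 (v i) (v j)))"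
    by (subst sum.swap) (simp add: sum_distrib_left algebra_simps)
  also have "\<dots> = (\<Sum>j<n. g j * det2 (psi n v f) (v j))" by (simp add: psi_lin)
  also have "\<dots> = - (\<Sum>j<n. g j * det2 (v j) (psi n v f))"
    by (simp add: sum_negf[symmetric] det2_def algebra_simps)
  also have "\<dots> = - det2 (psi n v g) (psi n v f)" by (simp add: psi_lin)
  also have "\<dots> = det2 (psi n v f) (psi n v g)" by (simp add: det2_def)
  finally show ?thesis .
qed

definition rr :: "nat \<Rightarrow> (nat \<Rightarrow> int \<times> int) \<Rightarrow> (nat \<Rightarrow> int \<times> int) \<Rightarrow> (nat \<Rightarrow> int) \<Rightarrow> nat \<Rightarrow> int" where
  "rr n v w a l = (\<Sum>i | i < n \<and> v i = w l. a i)"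

lemma rr_eq:
  assumes P: "\<forall>i<n. pos i < m \<and> w (pos i) = v i" and U: "\<forall>i<n. \<forall>l<m. w l = v i \<longrightarrow> l = pos i"
    and "l < m"
  shows "rr n v w a l = (\<Sum>i<n. if pos i = l then a i else 0)"
proof -
  have "{i. i < n \<and> v i = w l} = {i \<in> {..<n}. pos i = l}" using P U \<open>l<m\<close> by auto
  moreover have "(\<Sum>i<n. if pos i = l then a i else 0) = sum a {i \<in> {..<n}. pos i = l}"
    by (rule sum.inter_filter[symmetric]) simp
  ultimately show ?thesis unfolding rr_def by simp
qed

lemma rr_G:
  assumes P: "\<forall>i<n. pos i < m \<and> w (pos i) = v i" and U: "\<forall>i<n. \<forall>l<m. w l = v i \<longrightarrow> l = pos i"
  shows "(\<Sum>l<m. rr n v w a l * F l) = (\<Sum>i<n. a i * F (pos i))"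
proof -
  have "(\<Sum>l<m. rr n v w a l * F l) = (\<Sum>l<m. \<Sum>i<n. if pos i = l then a i * F l else 0)"
    using rr_eq[OF P U] by (auto simp: sum_distrib_right intro!: sum.cong)
  also have "\<dots> = (\<Sum>i<n. \<Sum>l<m. if pos i = l then a i * F l else 0)" by (rule sum.swap)
  also have "\<dots> = (\<Sum>i<n. a i * F (pos i))"
    using P by (intro sum.cong) (auto simp: sum.delta)
  finally show ?thesis .
qed


lemma modp: "j < (m::nat) \<Longrightarrow> (j + 1) mod m = (if j + 1 = m then 0 else j + 1)"
proof -
  assume "j < m"
  show ?thesis
  proof (cases "j + 1 = m")
    case True thus ?thesis by simp
  next
    case False hence "j + 1 < m" using \<open>j<m\<close> by linarith
    thus ?thesis using False by (simp only: mod_less if_False)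
  qed
qed

lemma modm: "k < (m::nat) \<Longrightarrow> (k + m - 1) mod m = (if k = 0 then m - 1 else k - 1)"
proof -
  assume "k < m"
  show ?thesis
  proof (cases "k = 0")
    case True
    have "m - 1 < m" using \<open>k<m\<close> by linarith
    thus ?thesis using True by simp
  next
    case False
    hence "k + m - 1 = (k - 1) + m" by simp
    hence "(k + m - 1) mod m = (k - 1) mod m" by simp
    thus ?thesis using False \<open>k<m\<close> by simp
  qed
qed

lemma ti_sym: "toric_int m w j k = toric_int m w k j"
  unfolding toric_int_def by auto

lemma tp_sym: "toric_pair m w c d = toric_pair m w d c"
  unfolding toric_pair_def
  by (subst sum.swap) (simp add: ti_sym mult.commute mult.left_commute)

lemma tp_delta: "k < m \<Longrightarrow> toric_pair m w c (\<lambda>l. if l = k then 1 else 0) = (\<Sum>j<m. c j * toric_int m w j k)"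
proof -
  assume "k < m"
  have "\<And>j. (\<Sum>ka<m. c j * (if ka = k then 1 else 0) * toric_int m w j ka) = (\<Sum>ka<m. if ka = k then c j * toric_int m w j k else 0)"
    by (intro sum.cong) auto
  thus ?thesis unfolding toric_pair_def using \<open>k<m\<close> by simp
qed

lemma tp_expand: "toric_pair m w c d = (\<Sum>k<m. d k * toric_pair m w c (\<lambda>l. if l = k then 1 else 0))"
proof -
  have "toric_pair m w c d = (\<Sum>k<m. d k * (\<Sum>j<m. c j * toric_int m w j k))"
    unfolding toric_pair_def by (subst sum.swap) (simp add: sum_distrib_left algebra_simps)
  thus ?thesis by (simp add: tp_delta)
qed

lemma tp_three:
  assumes "3 \<le> m" "k < m"
  shows "(\<Sum>j<m. c j * toric_int m w j k) = c k * toric_int m w k k + c ((k+1) mod m) + c ((k+m-1) mod m)"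
proof -
  let ?p = "(k+1) mod m" and ?q = "(k+m-1) mod m"
  have e1: "?p = (if k+1 = m then 0 else k+1)" by (rule modp) (rule assms)
  have e2: "?q = (if k = 0 then m-1 else k-1)" by (rule modm) (rule assms)
  have pq: "?p < m" "?q < m" "?p \<noteq> k" "?q \<noteq> k" "?p \<noteq> ?q"
    using assms unfolding e1 e2 by auto
  have "\<And>j. j < m \<Longrightarrow> c j * toric_int m w j k =
      (if j = k then c k * toric_int m w k k else 0) + (if j = ?p then c j else 0) + (if j = ?q then c j else 0)"
  proof -
    fix j assume j: "j < m"
    have e3: "(j+1) mod m = (if j+1 = m then 0 else j+1)" by (rule modp) (rule j)
    have "j \<noteq> k \<Longrightarrow> (k = (j + 1) mod m) = (j = ?q)"
      using j assms unfolding e2 e3 by auto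
    thus "?thesis j" using pq unfolding toric_int_def by auto
  qed
  hence "(\<Sum>j<m. c j * toric_int m w j k) = (\<Sum>j<m. (if j = k then c k * toric_int m w k k else 0) + (if j = ?p then c j else 0) + (if j = ?q then c j else 0))"
    by (intro sum.cong) auto
  also have "\<dots> = c k * toric_int m w k k + c ?p + c ?q"
    using pq assms by (simp add: sum.distrib)
  finally show ?thesis .
qed


definition c0 :: "(nat \<Rightarrow> int \<times> int) \<Rightarrow> (nat \<Rightarrow> int) \<Rightarrow> nat \<Rightarrow> int" where
  "c0 w r k = (\<Sum>l<k. r l * det2 (w l) (w k))"

lemma c0_eq:
  assumes m3: "3 \<le> m" and D: "\<forall>k<m. det2 (w k) (w ((k + 1) mod m)) = 1"
    and Z: "\<And>x. (\<Sum>l<m. r l * det2 (w l) x) = 0" and k: "k < m"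
  shows "c0 w r k * toric_int m w k k + c0 w r ((k+1) mod m) + c0 w r ((k+m-1) mod m) = r k"
proof -
  have D1: "\<And>j. j + 1 < m \<Longrightarrow> det2 (w j) (w (j+1)) = 1"
  proof -
    fix j assume "j + 1 < m"
    hence "(j+1) mod m = j + 1" by simp
    thus "det2 (w j) (w (j+1)) = 1" using D \<open>j+1<m\<close> by (metis add_lessD1)
  qed
  have Dl: "det2 (w (m-1)) (w 0) = 1"
  proof -
    have "m - 1 < m" "(m - 1 + 1) mod m = 0" using m3 by auto
    thus ?thesis using D by metis
  qed
  have c00: "c0 w r 0 = 0" by (simp add: c0_def)
  have cl: "c0 w r (m-1) = 0"
  proof -
    have "c0 w r (m-1) = (\<Sum>l<Suc (m-1). r l * det2 (w l) (w (m-1)))"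
      by (simp add: c0_def)
    also have "Suc (m-1) = m" using m3 by simp
    finally show ?thesis using Z by simp
  qed
  have Tkk: "toric_int m w k k = - det2 (w ((k + m - 1) mod m)) (w ((k + 1) mod m))"
    by (simp add: toric_int_def)
  show ?thesis
  proof (cases "k = 0")
    case True
    have e1: "(k+1) mod m = 1" using True m3 by simp
    have e2: "(k+m-1) mod m = m - 1" using True m3 by simp
    have "c0 w r 1 = r 0" using D1[of 0] m3 by (simp add: c0_def)
    thus ?thesis using True e1 e2 c00 cl by simp
  next
    case False
    show ?thesis
    proof (cases "k = m - 1")
      case True
      define q where "q = m - 2"
      have q: "m = Suc (Suc q)" using m3 unfolding q_def by simp
      have e1: "(k+1) mod m = 0" using True m3 by simp
      have e2: "(k+m-1) mod m = q" using True q False modm[OF k] by simp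
      have dd: "det2 (w (Suc q)) (w q) = -1" proof -
        have "det2 (w q) (w (Suc q)) = 1" using D1[of q] q by simp
        moreover have "det2 (w (Suc q)) (w q) = - det2 (w q) (w (Suc q))" by (simp add: det2_def algebra_simps)
        ultimately show ?thesis by simp
      qed
      have "0 = (\<Sum>l<m. r l * det2 (w l) (w q))" using Z by simp
      also have "\<dots> = c0 w r q + r (Suc q) * det2 (w (Suc q)) (w q)"
        unfolding q by (simp add: c0_def)
      finally have "c0 w r q = r (Suc q)" using dd by simp
      thus ?thesis using e1 e2 c00 cl True q by simp
    next
      case False2: False
      obtain p where p: "k = Suc p" using False by (cases k) auto
      have kk: "Suc (Suc p) < m" using p False2 k by simp
      have e1: "(k+1) mod m = Suc (Suc p)" using p kk by simp
      have e2: "(k+m-1) mod m = p" using p modm[OF k] by simp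
      let ?b = "det2 (w p) (w (Suc (Suc p)))"
      have d1: "det2 (w p) (w (Suc p)) = 1" using D1[of p] kk by simp
      have d2: "det2 (w (Suc p)) (w (Suc (Suc p))) = 1" using D1[of "Suc p"] kk by simp
      have S: "(\<Sum>l<p. r l * det2 (w l) (w p)) + (\<Sum>l<p. r l * det2 (w l) (w (Suc (Suc p))))
          = ?b * (\<Sum>l<p. r l * det2 (w l) (w (Suc p)))"
      proof -
        have "\<And>l. r l * det2 (w l) (w p) + r l * det2 (w l) (w (Suc (Suc p))) = ?b * (r l * det2 (w l) (w (Suc p)))"
        proof -
          fix l
          have "r l * det2 (w l) (w p) + r l * det2 (w l) (w (Suc (Suc p))) = r l * (det2 (w l) (w p) + det2 (w l) (w (Suc (Suc p))))"
            by (simp only: distrib_left)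
          also have "\<dots> = r l * (?b * det2 (w l) (w (Suc p)))" using det_id[OF d1 d2] by simp
          finally show "?thesis l" by simp
        qed
        thus ?thesis by (simp add: sum.distrib[symmetric] sum_distrib_left)
      qed
      have "c0 w r (Suc (Suc p)) = (\<Sum>l<p. r l * det2 (w l) (w (Suc (Suc p)))) + r p * ?b + r (Suc p)"
        using d2 by (simp add: c0_def)
      moreover have "c0 w r (Suc p) = (\<Sum>l<p. r l * det2 (w l) (w (Suc p))) + r p"
        using d1 by (simp add: c0_def)
      moreover have "c0 w r p = (\<Sum>l<p. r l * det2 (w l) (w p))" by (simp add: c0_def)
      ultimately show ?thesis using Tkk e1 e2 p S by (simp add: algebra_simps)
    qed
  qed
qed


lemma mono_steps_le:
  fixes f :: "nat \<Rightarrow> real"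
  assumes "\<forall>i. Suc i < n \<longrightarrow> f i \<le> f (Suc i)" "i \<le> j" "j < n"
  shows "f i \<le> f j"
  using assms(2,3)
proof (induction j)
  case 0 thus ?case by simp
next
  case (Suc j)
  show ?case
  proof (cases "i = Suc j")
    case True thus ?thesis by simp
  next
    case False
    hence "i \<le> j" using Suc by simp
    hence "f i \<le> f j" using Suc by simp
    also have "f j \<le> f (Suc j)" using assms(1) Suc by simp
    finally show ?thesis .
  qed
qed

lemma mono_steps_less:
  fixes f :: "nat \<Rightarrow> real"
  assumes "\<forall>i. Suc i < n \<longrightarrow> f i < f (Suc i)" "i < j" "j < n"
  shows "f i < f j"
  using assms(2,3)
proof (induction j)
  case 0 thus ?case by simp
next
  case (Suc j)
  show ?case
  proof (cases "i = j")
    case True thus ?thesis using assms(1) Suc by simp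
  next
    case False
    hence "i < j" using Suc by simp
    hence "f i < f j" using Suc by simp
    also have "f j < f (Suc j)" using assms(1) Suc by simp
    finally show ?thesis .
  qed
qed

lemma int_01:
  fixes z :: int
  assumes "-(2*pi) < 2*pi*z" "2*pi*z < 4*pi"
  shows "z = 0 \<or> z = 1"
proof -
  have h1: "2*pi*z < 2*pi*2" using assms by linarith
  have h2: "2*pi*(-1) < 2*pi*z" using assms by linarith
  have "real_of_int z < 2" using h1 pi_gt_zero by (simp only: mult_less_cancel_left_pos)
  moreover have "-1 < real_of_int z" using h2 pi_gt_zero by (simp only: mult_less_cancel_left_pos)
  ultimately show ?thesis by linarith
qed

lemma angle_lemma:
  fixes \<theta> \<phi> :: "nat \<Rightarrow> real"
  assumes P: "\<forall>i<n. pos i < m \<and> w (pos i) = v i"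
    and th: "\<forall>i<n. arg_det (v i) (\<theta> i)" "\<forall>i. Suc i < n \<longrightarrow> \<theta> i \<le> \<theta> (Suc i)"
       "0 < n \<longrightarrow> \<theta> (n - 1) \<le> \<theta> 0 + 2 * pi"
    and ph: "\<forall>k<m. arg_det (w k) (\<phi> k)" "\<And>j k. j < k \<Longrightarrow> k < m \<Longrightarrow> \<phi> j < \<phi> k"
       "\<And>k. k < m \<Longrightarrow> \<phi> 0 \<le> \<phi> k \<and> \<phi> k < \<phi> 0 + 2*pi"
  shows "\<exists>hi. (\<forall>i j. i < j \<longrightarrow> j < n \<longrightarrow> hi i \<longrightarrow> hi j) \<and>
     (\<forall>i<n. \<forall>j<n. v i \<noteq> v j \<longrightarrow> (pos i < pos j \<longleftrightarrow> (hi i = hi j \<and> i < j) \<or> (hi i \<and> \<not> hi j)))"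
proof (cases "n = 0")
  case True thus ?thesis by auto
next
  case False
  define \<sigma> where "\<sigma> i = \<phi> (pos i)" for i
  have ex: "\<forall>i<n. \<exists>z::int. \<theta> i = \<sigma> i + 2*pi*z"
  proof (intro allI impI)
    fix i assume i: "i < n"
    have "arg_det (v i) (\<sigma> i)" using ph(1) P i unfolding \<sigma>_def by metis
    thus "\<exists>z::int. \<theta> i = \<sigma> i + 2*pi*z" using arg_det_diff th(1) i by blast
  qed
  define kk where "kk i = (SOME z::int. \<theta> i = \<sigma> i + 2*pi*z)" for i
  have kk: "\<And>i. i < n \<Longrightarrow> \<theta> i = \<sigma> i + 2*pi*kk i"
    unfolding kk_def using ex by (metis (mono_tags, lifting) someI_ex)
  have win: "\<And>i. i < n \<Longrightarrow> \<phi> 0 \<le> \<sigma> i \<and> \<sigma> i < \<phi> 0 + 2*pi"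
    unfolding \<sigma>_def using ph(3) P by blast
  have thb: "\<And>i. i < n \<Longrightarrow> \<theta> 0 \<le> \<theta> i \<and> \<theta> i \<le> \<theta> 0 + 2*pi"
  proof -
    fix i assume i: "i < n"
    have "\<theta> 0 \<le> \<theta> i" using mono_steps_le[OF th(2), of 0 i] i by simp
    moreover have "\<theta> i \<le> \<theta> (n - 1)" using mono_steps_le[OF th(2), of i "n-1"] i by simp
    ultimately show "\<theta> 0 \<le> \<theta> i \<and> \<theta> i \<le> \<theta> 0 + 2*pi" using th(3) i by simp
  qed
  define K where "K = kk 0"
  have n0: "0 < n" using False by simp
  have k01: "\<And>i. i < n \<Longrightarrow> kk i = K \<or> kk i = K + 1"
  proof -
    fix i assume i: "i < n"
    have "2*pi*(kk i - K) = (\<theta> i - \<theta> 0) - (\<sigma> i - \<sigma> 0)"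
      using kk[OF i] kk[OF n0] unfolding K_def by (simp add: algebra_simps)
    moreover have "-(2*pi) < (\<theta> i - \<theta> 0) - (\<sigma> i - \<sigma> 0)" "(\<theta> i - \<theta> 0) - (\<sigma> i - \<sigma> 0) < 4*pi"
      using thb[OF i] win[OF i] win[OF n0] by linarith+
    ultimately have "kk i - K = 0 \<or> kk i - K = 1" using int_01[of "kk i - K"] by simp
    thus "kk i = K \<or> kk i = K + 1" by auto
  qed
  define hi where "hi i = (kk i = K + 1)" for i
  have lo: "\<And>i. i < n \<Longrightarrow> \<not> hi i \<Longrightarrow> \<theta> i = \<sigma> i + 2*pi*K"
    using kk k01 hi_def by force
  have hh: "\<And>i. i < n \<Longrightarrow> hi i \<Longrightarrow> \<theta> i = \<sigma> i + 2*pi*K + 2*pi"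
  proof -
    fix i assume "i < n" "hi i"
    hence "\<theta> i = \<sigma> i + 2*pi*(K+1)" using kk hi_def by simp
    thus "\<theta> i = \<sigma> i + 2*pi*K + 2*pi" by (simp add: algebra_simps)
  qed
  have t0: "\<theta> 0 = \<sigma> 0 + 2*pi*K" using kk[OF n0] K_def by simp
  have tmono: "\<And>i j. i < j \<Longrightarrow> j < n \<Longrightarrow> \<theta> i \<le> \<theta> j"
    using mono_steps_le[OF th(2)] by simp
  have C: "\<And>i j. i < j \<Longrightarrow> j < n \<Longrightarrow> hi i \<Longrightarrow> hi j"
  proof (rule ccontr)
    fix i j assume a: "i < j" "j < n" "hi i" "\<not> hi j"
    have "\<theta> i \<le> \<theta> j" using tmono a by simp
    moreover have "\<theta> i = \<sigma> i + 2*pi*K + 2*pi" using hh a by simp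
    moreover have "\<theta> j = \<sigma> j + 2*pi*K" using lo a by simp
    moreover have "\<phi> 0 \<le> \<sigma> i" "\<sigma> j < \<phi> 0 + 2*pi" using win a by auto
    ultimately show False by linarith
  qed
  have A: "\<And>i j. i < j \<Longrightarrow> j < n \<Longrightarrow> hi i = hi j \<Longrightarrow> \<sigma> i \<le> \<sigma> j"
  proof -
    fix i j assume a: "i < j" "j < n" "hi i = hi j"
    have "\<theta> i \<le> \<theta> j" using tmono a by simp
    thus "\<sigma> i \<le> \<sigma> j" using a lo hh by (cases "hi i") force+
  qed
  have B: "\<And>i j. i < n \<Longrightarrow> j < n \<Longrightarrow> \<not> hi i \<Longrightarrow> hi j \<Longrightarrow> \<sigma> j \<le> \<sigma> i"
  proof -
    fix i j assume a: "i < n" "j < n" "\<not> hi i" "hi j"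
    have "\<theta> 0 \<le> \<theta> i" "\<theta> j \<le> \<theta> 0 + 2*pi" using thb a by auto
    moreover have "\<theta> i = \<sigma> i + 2*pi*K" using lo a by simp
    moreover have "\<theta> j = \<sigma> j + 2*pi*K + 2*pi" using hh a by simp
    ultimately show "\<sigma> j \<le> \<sigma> i" using t0 by linarith
  qed
  have PS: "\<And>i j. i < n \<Longrightarrow> j < n \<Longrightarrow> v i \<noteq> v j \<Longrightarrow> (pos i < pos j \<longleftrightarrow> \<sigma> i < \<sigma> j) \<and> \<sigma> i \<noteq> \<sigma> j"
  proof -
    fix i j assume a: "i < n" "j < n" "v i \<noteq> v j"
    have "pos i \<noteq> pos j" using P a by metis
    moreover have "pos i < m" "pos j < m" using P a by auto
    ultimately show "(pos i < pos j \<longleftrightarrow> \<sigma> i < \<sigma> j) \<and> \<sigma> i \<noteq> \<sigma> j"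
      unfolding \<sigma>_def using ph(2) by (metis less_asym' linorder_neqE_nat)
  qed
  have "\<forall>i<n. \<forall>j<n. v i \<noteq> v j \<longrightarrow> (pos i < pos j \<longleftrightarrow> (hi i = hi j \<and> i < j) \<or> (hi i \<and> \<not> hi j))"
  proof (intro allI impI)
    fix i j assume a: "i < n" "j < n" "v i \<noteq> v j"
    have ij: "i \<noteq> j" using a by auto
    note ps = PS[OF a]
    show "pos i < pos j \<longleftrightarrow> (hi i = hi j \<and> i < j) \<or> (hi i \<and> \<not> hi j)"
    proof (cases "hi i = hi j")
      case True
      show ?thesis
      proof (cases "i < j")
        case True
        thus ?thesis using A[OF True a(2) \<open>hi i = hi j\<close>] ps \<open>hi i = hi j\<close> by auto
      next
        case False
        hence "j < i" using ij by simp
        thus ?thesis using A[OF \<open>j<i\<close> a(1)] \<open>hi i = hi j\<close> ps by auto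
      qed
    next
      case False
      show ?thesis
      proof (cases "hi i")
        case True
        hence "\<not> hi j" using False by simp
        thus ?thesis using B[OF a(2) a(1) \<open>\<not> hi j\<close> True] ps True by auto
      next
        case F2: False
        hence "hi j" using False by simp
        thus ?thesis using B[OF a(1) a(2) F2 \<open>hi j\<close>] ps F2 by auto
      qed
    qed
  qed
  thus ?thesis using C by blast
qed


lemma psi_split:
  assumes "psi n v a = (0,0)"
  shows "fst (psi n v (\<lambda>i. if H i then a i else 0)) = - fst (psi n v (\<lambda>i. if H i then 0 else a i))"
    "snd (psi n v (\<lambda>i. if H i then a i else 0)) = - snd (psi n v (\<lambda>i. if H i then 0 else a i))"
proof -
  have "\<And>g. (\<Sum>i<n. (if H i then a i else 0) * g i) + (\<Sum>i<n. (if H i then 0 else a i) * g i) = (\<Sum>i<n. a i * g i)"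
    by (simp add: sum.distrib[symmetric] if_distrib cong: if_cong) (auto intro!: sum.cong)
  from this[of "\<lambda>i. fst (v i)"] this[of "\<lambda>i. snd (v i)"] assms
  show "fst (psi n v (\<lambda>i. if H i then a i else 0)) = - fst (psi n v (\<lambda>i. if H i then 0 else a i))"
    "snd (psi n v (\<lambda>i. if H i then a i else 0)) = - snd (psi n v (\<lambda>i. if H i then 0 else a i))"
    unfolding psi_def by (simp_all add: algebra_simps)
qed

lemma final_alg:
  assumes C: "\<forall>i j. i < j \<longrightarrow> j < n \<longrightarrow> hi i \<longrightarrow> hi j"
    and H: "\<forall>i<n. \<forall>j<n. v i \<noteq> v j \<longrightarrow> (pos i < pos j \<longleftrightarrow> (hi i = hi j \<and> i < j) \<or> (hi i \<and> \<not> hi j))"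
    and a0: "psi n v a = (0,0)" and b0: "psi n v b = (0,0)"
  shows "(\<Sum>j<n. b j * (\<Sum>i<n. a i * (if pos i < pos j then det2 (v i) (v j) else 0))) - (\<Sum>i<n. a i * b i)
     = - chi n v a b"
proof -
  define F where "F i j = a i * b j * det2 (v i) (v j)" for i j
  have s1: "(\<Sum>j<n. b j * (\<Sum>i<n. a i * (if pos i < pos j then det2 (v i) (v j) else 0)))
      = (\<Sum>i<n. \<Sum>j<n. if pos i < pos j then F i j else 0)"
    by (subst sum.swap) (simp add: sum_distrib_left F_def mult_ac if_distrib cong: if_cong)
  have pw: "\<And>i j. i < n \<Longrightarrow> j < n \<Longrightarrow> (if pos i < pos j then F i j else 0) =
     (if i < j then F i j else 0) + (if hi i \<and> \<not> hi j then F i j else 0) - (if \<not> hi i \<and> hi j then F i j else 0)"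
  proof -
    fix i j assume ij: "i < n" "j < n"
    show "?thesis i j"
    proof (cases "v i = v j")
      case True thus ?thesis by (simp add: F_def)
    next
      case False
      hence ne: "i \<noteq> j" by auto
      have h: "pos i < pos j \<longleftrightarrow> (hi i = hi j \<and> i < j) \<or> (hi i \<and> \<not> hi j)" using H ij False by blast
      have c1: "hi i \<and> \<not> hi j \<Longrightarrow> \<not> i < j" using C ij by blast
      have c2: "\<not> hi i \<and> hi j \<Longrightarrow> i < j" using C ij ne by (meson linorder_neqE_nat)
      show ?thesis using h c1 c2 by (cases "hi i"; cases "hi j") auto
    qed
  qed
  have s2: "(\<Sum>i<n. \<Sum>j<n. if pos i < pos j then F i j else 0) =
     (\<Sum>i<n. \<Sum>j<n. if i < j then F i j else 0) + (\<Sum>i<n. \<Sum>j<n. if hi i \<and> \<not> hi j then F i j else 0)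
       - (\<Sum>i<n. \<Sum>j<n. if \<not> hi i \<and> hi j then F i j else 0)"
    using pw by (simp add: sum.distrib sum_subtractf)
  have s3: "(\<Sum>i<n. \<Sum>j<n. if hi i \<and> \<not> hi j then F i j else 0) =
      det2 (psi n v (\<lambda>i. if hi i then a i else 0)) (psi n v (\<lambda>j. if hi j then 0 else b j))"
    by (subst psi_bil[symmetric]) (auto simp: F_def intro!: sum.cong)
  have s4: "(\<Sum>i<n. \<Sum>j<n. if \<not> hi i \<and> hi j then F i j else 0) =
      det2 (psi n v (\<lambda>i. if hi i then 0 else a i)) (psi n v (\<lambda>j. if hi j then b j else 0))"
    by (subst psi_bil[symmetric]) (auto simp: F_def intro!: sum.cong)
  have s34: "(\<Sum>i<n. \<Sum>j<n. if hi i \<and> \<not> hi j then F i j else 0) = (\<Sum>i<n. \<Sum>j<n. if \<not> hi i \<and> hi j then F i j else 0)"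
    unfolding s3 s4 det2_def psi_split[OF a0, of hi] psi_split[OF b0, of hi] by simp
  have s5: "(\<Sum>i<n. \<Sum>j<n. if i < j then F i j else 0) + (\<Sum>i<n. \<Sum>j<n. if j < i then F i j else 0) = 0"
  proof -
    have "(\<Sum>i<n. \<Sum>j<n. if i < j then F i j else 0) + (\<Sum>i<n. \<Sum>j<n. if j < i then F i j else 0)
        = (\<Sum>i<n. \<Sum>j<n. F i j)"
      by (simp add: sum.distrib[symmetric]) (auto simp: F_def intro!: sum.cong)
    also have "\<dots> = det2 (psi n v a) (psi n v b)" unfolding F_def by (rule psi_bil)
    finally show ?thesis using a0 b0 by (simp add: det2_def)
  qed
  have s6: "chi n v a b = (\<Sum>i<n. a i * b i) + (\<Sum>i<n. \<Sum>j<n. if j < i then F i j else 0)"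
  proof -
    have "chi n v a b = (\<Sum>i<n. \<Sum>j<n. (if i = j then a i * b j else 0) + (if j < i then F i j else 0))"
      unfolding chi_def F_def by (auto intro!: sum.cong)
    also have "\<dots> = (\<Sum>i<n. a i * b i) + (\<Sum>i<n. \<Sum>j<n. if j < i then F i j else 0)"
      by (simp add: sum.distrib)
    finally show ?thesis .
  qed
  show ?thesis using s1 s2 s34 s5 s6 by linarith
qed


theorem lemma2p4:
  fixes n :: nat and v :: "nat \<Rightarrow> int \<times> int"
    and m :: nat and w :: "nat \<Rightarrow> int \<times> int"
    and \<alpha> \<beta> :: "nat \<Rightarrow> int"
  assumes "finite_coker n v"
    and "is_seed n v"
    and "cyclically_ordered n v"
    and "smooth_complete_fan m w"
    and "fan_contains_rays m w n v"
    and "in_K n v \<alpha>" and "in_K n v \<beta>"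
  shows "(\<exists>c. represents_C m w n v \<alpha> c) \<and> (\<exists>d. represents_C m w n v \<beta> d)
    \<and> (\<forall>c d. represents_C m w n v \<alpha> c \<longrightarrow> represents_C m w n v \<beta> d \<longrightarrow>
          blowup_pair m w n v \<alpha> \<beta> c d = - chi n v \<alpha> \<beta>)"
proof -
  have m3: "3 \<le> m" and D: "\<forall>k<m. det2 (w k) (w ((k + 1) mod m)) = 1"
    using assms(4) unfolding smooth_complete_fan_def by auto
  obtain \<phi> :: "nat \<Rightarrow> real" where ph1: "\<forall>k<m. arg_det (w k) (\<phi> k)"
    and ph2: "\<forall>k. Suc k < m \<longrightarrow> \<phi> k < \<phi> (Suc k)" and ph3: "\<phi> (m - 1) < \<phi> 0 + 2 * pi"
    using assms(4) unfolding smooth_complete_fan_def by blast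
  have phm: "\<And>j k. j < k \<Longrightarrow> k < m \<Longrightarrow> \<phi> j < \<phi> k" using mono_steps_less[OF ph2] by blast
  have phw: "\<And>k. k < m \<Longrightarrow> \<phi> 0 \<le> \<phi> k \<and> \<phi> k < \<phi> 0 + 2*pi"
  proof -
    fix k assume k: "k < m"
    have "\<phi> 0 \<le> \<phi> k" using phm[of 0 k] k by (cases k) auto
    moreover have "\<phi> k \<le> \<phi> (m - 1)"
    proof (cases "k = m - 1")
      case False
      hence "k < m - 1" using k by linarith
      thus ?thesis using phm[of k "m-1"] m3 by simp
    qed simp
    ultimately show "\<phi> 0 \<le> \<phi> k \<and> \<phi> k < \<phi> 0 + 2*pi" using ph3 by simp
  qed
  have winj: "\<And>k k'. k < m \<Longrightarrow> k' < m \<Longrightarrow> w k = w k' \<Longrightarrow> k = k'"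
  proof -
    fix k k' assume a: "k < m" "k' < m" "w k = w k'"
    have "arg_det (w k) (\<phi> k')" using ph1 a by metis
    then obtain z where "\<phi> k' = \<phi> k + 2*pi*real_of_int z" using arg_det_diff ph1 a by blast
    hence "\<phi> k = \<phi> k'" using win_unique phw a by blast
    thus "k = k'" using phm a by (metis less_irrefl linorder_neqE_nat)
  qed
  define pos where "pos i = (SOME k. k < m \<and> w k = v i)" for i
  have P: "\<forall>i<n. pos i < m \<and> w (pos i) = v i"
  proof (intro allI impI)
    fix i assume "i < n"
    hence "\<exists>k. k < m \<and> w k = v i" using assms(5) unfolding fan_contains_rays_def by auto
    thus "pos i < m \<and> w (pos i) = v i" unfolding pos_def by (rule someI_ex)
  qed
  have U: "\<forall>i<n. \<forall>l<m. w l = v i \<longrightarrow> l = pos i" using P winj by metis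
  have a0: "psi n v \<alpha> = (0,0)" and b0: "psi n v \<beta> = (0,0)" using assms(6,7) unfolding in_K_def by auto
  have Zg: "\<And>a x. psi n v a = (0,0) \<Longrightarrow> (\<Sum>l<m. rr n v w a l * det2 (w l) x) = 0"
  proof -
    fix a x assume "psi n v a = (0,0)"
    have "(\<Sum>l<m. rr n v w a l * det2 (w l) x) = (\<Sum>i<n. a i * det2 (w (pos i)) x)"
      by (rule rr_G[OF P U])
    also have "\<dots> = (\<Sum>i<n. a i * det2 (v i) x)" using P by simp
    also have "\<dots> = det2 (psi n v a) x" by (rule psi_lin)
    finally show "(\<Sum>l<m. rr n v w a l * det2 (w l) x) = 0" using \<open>psi n v a = (0,0)\<close> by (simp add: det2_def)
  qed
  have rep: "\<And>a. psi n v a = (0,0) \<Longrightarrow> represents_C m w n v a (c0 w (rr n v w a))"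
    unfolding represents_C_def
  proof (intro allI impI)
    fix a k assume a: "psi n v a = (0,0)" and k: "k < m"
    have "toric_pair m w (c0 w (rr n v w a)) (\<lambda>l. if l = k then 1 else 0) = rr n v w a k"
      using tp_delta[OF k] tp_three[OF m3 k] c0_eq[OF m3 D Zg[OF a] k] by simp
    thus "toric_pair m w (c0 w (rr n v w a)) (\<lambda>l. if l = k then 1 else 0) = (\<Sum>i | i < n \<and> v i = w k. a i)"
      by (simp add: rr_def)
  qed
  have repr: "\<And>a c k. represents_C m w n v a c \<Longrightarrow> k < m \<Longrightarrow> toric_pair m w c (\<lambda>l. if l = k then 1 else 0) = rr n v w a k"
    unfolding represents_C_def rr_def by blast
  have third: "\<forall>c d. represents_C m w n v \<alpha> c \<longrightarrow> represents_C m w n v \<beta> d \<longrightarrow>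
          blowup_pair m w n v \<alpha> \<beta> c d = - chi n v \<alpha> \<beta>"
  proof (intro allI impI)
    fix c d assume c: "represents_C m w n v \<alpha> c" and d: "represents_C m w n v \<beta> d"
    let ?c = "c0 w (rr n v w \<alpha>)"
    have "toric_pair m w c d = (\<Sum>k<m. d k * rr n v w \<alpha> k)"
      by (subst tp_expand) (simp add: repr[OF c])
    also have "\<dots> = toric_pair m w ?c d"
      by (subst tp_expand) (simp add: repr[OF rep[OF a0]])
    also have "\<dots> = toric_pair m w d ?c" by (rule tp_sym)
    also have "\<dots> = (\<Sum>k<m. ?c k * rr n v w \<beta> k)"
      by (subst tp_expand) (simp add: repr[OF d])
    also have "\<dots> = (\<Sum>k<m. rr n v w \<beta> k * ?c k)" by (simp add: mult.commute)
    also have "\<dots> = (\<Sum>j<n. \<beta> j * ?c (pos j))" by (rule rr_G[OF P U])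
    also have "\<dots> = (\<Sum>j<n. \<beta> j * (\<Sum>i<n. \<alpha> i * (if pos i < pos j then det2 (v i) (v j) else 0)))"
    proof (intro sum.cong refl arg_cong[where f = "\<lambda>x. \<beta> _ * x"])
      fix j assume j: "j \<in> {..<n}"
      have pj: "pos j < m" "w (pos j) = v j" using P j by auto
      have "?c (pos j) = (\<Sum>l\<in>{l \<in> {..<m}. l < pos j}. rr n v w \<alpha> l * det2 (w l) (v j))"
      proof -
        have "{l \<in> {..<m}. l < pos j} = {..<pos j}" using pj by auto
        thus ?thesis unfolding c0_def using pj by simp
      qed
      also have "\<dots> = (\<Sum>l<m. rr n v w \<alpha> l * (if l < pos j then det2 (w l) (v j) else 0))"
        by (subst sum.inter_filter) (auto intro!: sum.cong)
      also have "\<dots> = (\<Sum>i<n. \<alpha> i * (if pos i < pos j then det2 (w (pos i)) (v j) else 0))"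
        by (rule rr_G[OF P U])
      also have "\<dots> = (\<Sum>i<n. \<alpha> i * (if pos i < pos j then det2 (v i) (v j) else 0))"
        using P by (auto intro!: sum.cong)
      finally show "?c (pos j) = \<dots>" .
    qed
    finally have "toric_pair m w c d = \<dots>" .
    moreover obtain \<theta> where th: "\<forall>i<n. arg_det (v i) (\<theta> i)" "\<forall>i. Suc i < n \<longrightarrow> \<theta> i \<le> \<theta> (Suc i)"
       "0 < n \<longrightarrow> \<theta> (n - 1) \<le> \<theta> 0 + 2 * pi"
      using assms(3) unfolding cyclically_ordered_def by blast
    then obtain hi where "\<forall>i j. i < j \<longrightarrow> j < n \<longrightarrow> hi i \<longrightarrow> hi j"
      "\<forall>i<n. \<forall>j<n. v i \<noteq> v j \<longrightarrow> (pos i < pos j \<longleftrightarrow> (hi i = hi j \<and> i < j) \<or> (hi i \<and> \<not> hi j))"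
      using angle_lemma[OF P th ph1 phm phw] by blast
    note fa = final_alg[OF this a0 b0]
    ultimately show "blowup_pair m w n v \<alpha> \<beta> c d = - chi n v \<alpha> \<beta>"
      unfolding blowup_pair_def by simp
  qed
  show ?thesis using rep[OF a0] rep[OF b0] third by blast
qed

end
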